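(* Let $A$ be a set and $f:[-1,1]^A \to \mathbb{R}$ a function that is continuous (for the product topology) and positively homogeneous, and that depends on finitely many coordinates, i.e. there exist a finite subset $A_0 \subset A$ and $\tilde{f}:[-1,1]^{A_0} \to \mathbb{R}$ with $f(x^* ) = \tilde{f}(x^*|_{A_0})$ for all $x^*$. Then $f \in FBL(A)$.
   Context: Positively homogeneous means $f(\lambda x^* )=\lambda f(x^* )$ whenever $\lambda\ge 0$ and $x^*,\lambda x^*\in[-1,1]^A$. For $x\in A$, $\delta_x:[-1,1]^A\to[-1,1]$ is $\delta_x(x^* )=x^*(x)$. For $f:[-1,1]^A\to\mathbb{R}$, $\|f\| = \sup \{\sum_{i = 1}^n | f(x_{i}^{\ast})| : n \in \mathbb{N},\ x_1^{\ast}, \ldots, x_n^{\ast} \in [-1,1]^A,\ \sup_{x \in A} \sum_{i=1}^n |x_i^{\ast}(x)| \leq 1 \}$. $FBL(A)$ is the Banach lattice generated by the functions $\delta_x$ ($x\in A$) inside the Banach lattice of all functions $[-1,1]^A\to\mathbb{R}$ with finite norm (pointwise operations and order). *)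

theory Defs
  imports "HOL-Analysis.Analysis"
begin

text \<open>The cube [-1,1]^A, for A :: 'a set, is represented by functions 'a => real
  with values in [-1,1] on A and value 0 outside A. The topology on 'a => real
  is the product topology (library instance), so the subspace topology on this
  set is the product topology of [-1,1]^A.\<close>
definition cube :: "'a set \<Rightarrow> ('a \<Rightarrow> real) set" where
  "cube A = {x. (\<forall>a\<in>A. -1 \<le> x a \<and> x a \<le> 1) \<and> (\<forall>a. a \<notin> A \<longrightarrow> x a = 0)}"

text \<open>Functions on the cube are represented by functions vanishing outside it.\<close>
definition on_cube :: "'a set \<Rightarrow> (('a \<Rightarrow> real) \<Rightarrow> real) \<Rightarrow> (('a \<Rightarrow> real) \<Rightarrow> real)" where
  "on_cube A f = (\<lambda>x. if x \<in> cube A then f x else 0)"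

definition delta :: "'a set \<Rightarrow> 'a \<Rightarrow> (('a \<Rightarrow> real) \<Rightarrow> real)" where
  "delta A a = on_cube A (\<lambda>x. x a)"

definition fbl_sums :: "'a set \<Rightarrow> (('a \<Rightarrow> real) \<Rightarrow> real) \<Rightarrow> real set" where
  "fbl_sums A f = {(\<Sum>i<n. \<bar>f (xs i)\<bar>) | (n::nat) (xs :: nat \<Rightarrow> 'a \<Rightarrow> real).
      (\<forall>i<n. xs i \<in> cube A) \<and> (\<forall>a\<in>A. (\<Sum>i<n. \<bar>xs i a\<bar>) \<le> 1)}"

definition fbl_norm :: "'a set \<Rightarrow> (('a \<Rightarrow> real) \<Rightarrow> real) \<Rightarrow> real" where
  "fbl_norm A f = Sup (fbl_sums A f)"

text \<open>The ambient Banach lattice: functions on the cube with finite norm.\<close>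
definition fin_norm_space :: "'a set \<Rightarrow> (('a \<Rightarrow> real) \<Rightarrow> real) set" where
  "fin_norm_space A = {f. (\<forall>x. x \<notin> cube A \<longrightarrow> f x = 0) \<and> bdd_above (fbl_sums A f)}"

definition closed_sublattice :: "'a set \<Rightarrow> (('a \<Rightarrow> real) \<Rightarrow> real) set \<Rightarrow> bool" where
  "closed_sublattice A S \<longleftrightarrow>
     S \<subseteq> fin_norm_space A \<and>
     (\<lambda>x. 0) \<in> S \<and>
     (\<forall>f\<in>S. \<forall>g\<in>S. (\<lambda>x. f x + g x) \<in> S) \<and>
     (\<forall>c::real. \<forall>f\<in>S. (\<lambda>x. c * f x) \<in> S) \<and>
     (\<forall>f\<in>S. \<forall>g\<in>S. (\<lambda>x. max (f x) (g x)) \<in> S \<and> (\<lambda>x. min (f x) (g x)) \<in> S) \<and>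
     (\<forall>F g. (\<forall>n. F n \<in> S) \<and> g \<in> fin_norm_space A \<and>
            (\<lambda>n. fbl_norm A (\<lambda>x. F n x - g x)) \<longlonglongrightarrow> 0 \<longrightarrow> g \<in> S)"

definition FBL :: "'a set \<Rightarrow> (('a \<Rightarrow> real) \<Rightarrow> real) set" where
  "FBL A = \<Inter> {S. closed_sublattice A S \<and> (\<forall>a\<in>A. delta A a \<in> S)}"

end

theory Submission
  imports Defs
begin

lemma fin_min_closed:
  assumes mc: "\<And>g h. g \<in> L \<Longrightarrow> h \<in> L \<Longrightarrow> (\<lambda>z. min (g z) (h z)) \<in> L"
    and "finite Y" "Y \<noteq> {}" "\<And>y. y \<in> Y \<Longrightarrow> H y \<in> L"
  shows "(\<lambda>z. Min ((\<lambda>y. H y z) ` Y)) \<in> L"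
  using assms(2,3,4)
proof (induction Y rule: finite_ne_induct)
  case (singleton y) then show ?case by simp
next
  case (insert y Y)
  have "(\<lambda>z. Min ((\<lambda>y. H y z) ` insert y Y)) = (\<lambda>z. min (H y z) (Min ((\<lambda>y. H y z) ` Y)))"
    using insert.hyps by (simp add: Min_insert)
  then show ?case using mc insert by simp
qed

lemma fin_max_closed:
  assumes mc: "\<And>g h. g \<in> L \<Longrightarrow> h \<in> L \<Longrightarrow> (\<lambda>z. max (g z) (h z)) \<in> L"
    and "finite Y" "Y \<noteq> {}" "\<And>y. y \<in> Y \<Longrightarrow> H y \<in> L"
  shows "(\<lambda>z. Max ((\<lambda>y. H y z) ` Y)) \<in> L"
  using assms(2,3,4)
proof (induction Y rule: finite_ne_induct)
  case (singleton y) then show ?case by simp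
next
  case (insert y Y)
  have "(\<lambda>z. Max ((\<lambda>y. H y z) ` insert y Y)) = (\<lambda>z. max (H y z) (Max ((\<lambda>y. H y z) ` Y)))"
    using insert.hyps by (simp add: Max_insert)
  then show ?case using mc insert by simp
qed

lemma kk:
  fixes K :: "'b::topological_space set" and f :: "'b \<Rightarrow> real"
  assumes K: "compact K" and fc: "continuous_on K f"
    and Lc: "\<And>h. h \<in> L \<Longrightarrow> continuous_on K h"
    and mc: "\<And>g h. g \<in> L \<Longrightarrow> h \<in> L \<Longrightarrow> (\<lambda>z. min (g z) (h z)) \<in> L"
    and Mc: "\<And>g h. g \<in> L \<Longrightarrow> h \<in> L \<Longrightarrow> (\<lambda>z. max (g z) (h z)) \<in> L"
    and interp: "\<And>x y. x \<in> K \<Longrightarrow> y \<in> K \<Longrightarrow> \<exists>h\<in>L. h x = f x \<and> h y = f y"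
    and ne: "L \<noteq> {}" and e: "e > 0"
  shows "\<exists>h\<in>L. \<forall>x\<in>K. \<bar>h x - f x\<bar> < e"
proof (cases "K = {}")
  case True then show ?thesis using ne by auto
next
  case False
  have step1: "\<exists>g\<in>L. g x = f x \<and> (\<forall>z\<in>K. g z < f z + e)" if x: "x \<in> K" for x
  proof -
    obtain H where H: "\<And>y. y \<in> K \<Longrightarrow> H y \<in> L \<and> H y x = f x \<and> H y y = f y"
      using interp[OF x] by metis
    have "\<exists>U. open U \<and> U \<inter> K = (\<lambda>z. H y z - f z) -` {..<e} \<inter> K" if "y \<in> K" for y
      using continuous_on_diff[OF Lc fc, of "H y"] H[OF that] continuous_on_open_invariant open_lessThan
      by blast
    then obtain U where U: "\<And>y. y \<in> K \<Longrightarrow> open (U y) \<and> U y \<inter> K = (\<lambda>z. H y z - f z) -` {..<e} \<inter> K"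
      by metis
    have cov: "K \<subseteq> (\<Union>y\<in>K. U y)"
    proof
      fix y assume y: "y \<in> K"
      then have "y \<in> (\<lambda>z. H y z - f z) -` {..<e} \<inter> K" using H[OF y] e by simp
      then show "y \<in> (\<Union>y\<in>K. U y)" using U[OF y] y by blast
    qed
    obtain Y where Y: "Y \<subseteq> K" "finite Y" "K \<subseteq> (\<Union>y\<in>Y. U y)"
      using compactE_image[OF K, of K U] U cov by blast
    have Yne: "Y \<noteq> {}" using Y(3) x by blast
    define g where "g = (\<lambda>z. Min ((\<lambda>y. H y z) ` Y))"
    have HY: "\<And>y. y \<in> Y \<Longrightarrow> H y \<in> L" using H Y(1) by blast
    have "g \<in> L" unfolding g_def
      by (rule fin_min_closed[OF mc Y(2) Yne HY])
    moreover have "g x = f x"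
    proof -
      have "(\<lambda>y. H y x) ` Y = {f x}" using H Y(1) Yne by (force simp: image_iff)
      then show ?thesis by (simp add: g_def)
    qed
    moreover have "g z < f z + e" if z: "z \<in> K" for z
    proof -
      obtain y where y: "y \<in> Y" "z \<in> U y" using Y(3) z by blast
      then have "z \<in> U y \<inter> K" using z by blast
      then have "H y z - f z < e" using U[of y] y Y(1) by auto
      moreover have "g z \<le> H y z" unfolding g_def using y Y(2) by (simp add: Min_le)
      ultimately show ?thesis by linarith
    qed
    ultimately show ?thesis by blast
  qed
  then obtain G where G: "\<And>x. x \<in> K \<Longrightarrow> G x \<in> L \<and> G x x = f x \<and> (\<forall>z\<in>K. G x z < f z + e)"
    by metis
  have "\<exists>U. open U \<and> U \<inter> K = (\<lambda>z. f z - G y z) -` {..<e} \<inter> K" if "y \<in> K" for y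
    using continuous_on_diff[OF fc Lc, of "G y"] G[OF that] continuous_on_open_invariant open_lessThan
    by blast
  then obtain U where U: "\<And>y. y \<in> K \<Longrightarrow> open (U y) \<and> U y \<inter> K = (\<lambda>z. f z - G y z) -` {..<e} \<inter> K"
    by metis
  have cov: "K \<subseteq> (\<Union>y\<in>K. U y)"
  proof
    fix y assume y: "y \<in> K"
    then have "y \<in> (\<lambda>z. f z - G y z) -` {..<e} \<inter> K" using G[OF y] e by simp
    then show "y \<in> (\<Union>y\<in>K. U y)" using U[OF y] y by blast
  qed
  obtain Y where Y: "Y \<subseteq> K" "finite Y" "K \<subseteq> (\<Union>y\<in>Y. U y)"
    using compactE_image[OF K, of K U] U cov by blast
  have Yne: "Y \<noteq> {}" using Y(3) False by blast
  define h where "h = (\<lambda>z. Max ((\<lambda>y. G y z) ` Y))"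
  have GY: "\<And>y. y \<in> Y \<Longrightarrow> G y \<in> L" using G Y(1) by blast
  have "h \<in> L" unfolding h_def
    by (rule fin_max_closed[OF Mc Y(2) Yne GY])
  moreover have "\<bar>h z - f z\<bar> < e" if z: "z \<in> K" for z
  proof -
    obtain y where y: "y \<in> Y" "z \<in> U y" using Y(3) z by blast
    then have "z \<in> U y \<inter> K" using z by blast
    then have "f z - G y z < e" using U[of y] y Y(1) by auto
    moreover have "G y z \<le> h z" unfolding h_def using y Y(2) by (simp add: Max_ge)
    moreover have "h z < f z + e" unfolding h_def using Y G z Yne
      by (subst Max_less_iff) auto
    ultimately show ?thesis by linarith
  qed
  ultimately show ?thesis by blast
qed


lemma compact_PiE_UNIV:
  "compact (PiE UNIV (S::'a \<Rightarrow> real set)) \<longleftrightarrow> PiE UNIV S = {} \<or> (\<forall>i. compact (S i))"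
  using compactin_PiE[of "\<lambda>_. euclidean" UNIV S]
  by (simp add: euclidean_product_topology)

theorem mainTheorem6:
  fixes A :: "'a set" and f :: "('a \<Rightarrow> real) \<Rightarrow> real"
  assumes cont: "continuous_on (cube A) f"
    and homog: "\<And>c x. c \<ge> 0 \<Longrightarrow> x \<in> cube A \<Longrightarrow> (\<lambda>a. c * x a) \<in> cube A \<Longrightarrow>
                  f (\<lambda>a. c * x a) = c * f x"
    and fin: "\<exists>A0 ft. finite A0 \<and> A0 \<subseteq> A \<and>
                (\<forall>x\<in>cube A. f x = ft (\<lambda>a. if a \<in> A0 then x a else 0))"
  shows "on_cube A f \<in> FBL A"
proof -
  obtain A0 ft where A0: "finite A0" "A0 \<subseteq> A"
    and ft0: "\<forall>x\<in>cube A. f x = ft (\<lambda>a. if a \<in> A0 then x a else 0)"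
    using fin by blast
  define R where "R = (\<lambda>(x::'a\<Rightarrow>real) a. if a \<in> A0 then x a else 0)"
  define N where "N = (\<lambda>(x::'a\<Rightarrow>real). \<Sum>a\<in>A0. \<bar>x a\<bar>)"
  define K where "K = {y \<in> cube A. (\<forall>a. a \<notin> A0 \<longrightarrow> y a = 0) \<and> N y = 1}"
  have ft: "\<And>x. x \<in> cube A \<Longrightarrow> f x = ft (R x)" using ft0 by (simp add: R_def)
  have Rcube: "\<And>x. x \<in> cube A \<Longrightarrow> R x \<in> cube A" using A0(2) by (auto simp: R_def cube_def)
  have RR: "\<And>x. R (R x) = R x" by (auto simp: R_def)
  have fR: "\<And>x. x \<in> cube A \<Longrightarrow> f (R x) = f x" using ft Rcube RR by metis
  have NR: "\<And>x. N (R x) = N x" unfolding N_def R_def by (rule sum.cong) auto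
  have Ncont: "continuous_on UNIV N" unfolding N_def
    by (intro continuous_intros continuous_on_product_coordinates)
  have KC: "K \<subseteq> cube A" unfolding K_def by blast
  have cube0: "(\<lambda>a. 0) \<in> cube A" by (simp add: cube_def)
  define Sb where "Sb = (\<lambda>a. if a \<in> A0 then {-1..1::real} else {0})"
  have Keq: "PiE UNIV Sb \<inter> {y. N y = 1} = K"
  proof (intro equalityI subsetI)
    fix y assume "y \<in> PiE UNIV Sb \<inter> {y. N y = 1}"
    then have y: "\<And>a. y a \<in> Sb a" "N y = 1" by (auto simp: PiE_UNIV_domain Pi_def)
    have "y a \<in> {-1..1}" for a using y(1)[of a] by (auto simp: Sb_def split: if_splits)
    moreover have "a \<notin> A0 \<Longrightarrow> y a = 0" for a using y(1)[of a] by (auto simp: Sb_def)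
    ultimately show "y \<in> K" using y(2) A0(2) unfolding K_def cube_def by auto
  next
    fix y assume "y \<in> K"
    then show "y \<in> PiE UNIV Sb \<inter> {y. N y = 1}"
      using A0(2) unfolding K_def Sb_def cube_def PiE_UNIV_domain by (auto simp: Pi_def)
  qed
  have Kcomp: "compact K"
  proof -
    have "compact (PiE UNIV Sb)" unfolding compact_PiE_UNIV Sb_def by auto
    moreover have "closed {y. N y = 1}"
      by (rule closed_Collect_eq[OF Ncont]) simp
    ultimately show ?thesis using Keq compact_Int_closed by metis
  qed
  show ?thesis
    unfolding FBL_def
  proof (rule InterI, clarify)
    fix S assume Scl: "closed_sublattice A S" and Sd: "\<forall>a\<in>A. delta A a \<in> S"
    note Sprops = Scl[unfolded closed_sublattice_def]
    have S_sub: "S \<subseteq> fin_norm_space A" using Sprops by blast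
    have S_0: "(\<lambda>x. 0) \<in> S" using Sprops by blast
    have S_add: "\<And>g h. g \<in> S \<Longrightarrow> h \<in> S \<Longrightarrow> (\<lambda>x. g x + h x) \<in> S" using Sprops by blast
    have S_mult: "\<And>c g. g \<in> S \<Longrightarrow> (\<lambda>x. c * g x) \<in> S" using Sprops by blast
    have S_max: "\<And>g h. g \<in> S \<Longrightarrow> h \<in> S \<Longrightarrow> (\<lambda>x. max (g x) (h x)) \<in> S" using Sprops by blast
    have S_min: "\<And>g h. g \<in> S \<Longrightarrow> h \<in> S \<Longrightarrow> (\<lambda>x. min (g x) (h x)) \<in> S" using Sprops by blast
    have S_lim: "\<And>F g. (\<forall>n. F n \<in> S) \<Longrightarrow> g \<in> fin_norm_space A \<Longrightarrow>
            (\<lambda>n. fbl_norm A (\<lambda>x. F n x - g x)) \<longlonglongrightarrow> 0 \<Longrightarrow> g \<in> S" using Sprops by blast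
    define L where "L = {g \<in> S. (\<forall>c x. c \<ge> 0 \<longrightarrow> x \<in> cube A \<longrightarrow> (\<lambda>a. c * x a) \<in> cube A \<longrightarrow>
         g (\<lambda>a. c * x a) = c * g x) \<and> (\<forall>x\<in>cube A. g (R x) = g x) \<and> continuous_on (cube A) g}"
    have L0: "(\<lambda>x. 0) \<in> L" unfolding L_def using S_0 by auto
    have Ladd: "\<And>g h. g \<in> L \<Longrightarrow> h \<in> L \<Longrightarrow> (\<lambda>x. g x + h x) \<in> L"
      unfolding L_def using S_add by (auto simp: distrib_left intro: continuous_on_add)
    have Lmult: "\<And>c g. g \<in> L \<Longrightarrow> (\<lambda>x. c * g x) \<in> L"
      unfolding L_def using S_mult by (auto intro: continuous_on_mult continuous_on_const)
    have Lmax: "\<And>g h. g \<in> L \<Longrightarrow> h \<in> L \<Longrightarrow> (\<lambda>x. max (g x) (h x)) \<in> L"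
      unfolding L_def using S_max by (auto simp: max_mult_distrib_left intro: continuous_on_max)
    have Lmin: "\<And>g h. g \<in> L \<Longrightarrow> h \<in> L \<Longrightarrow> (\<lambda>x. min (g x) (h x)) \<in> L"
      unfolding L_def using S_min by (auto simp: min_mult_distrib_left intro: continuous_on_min)
    have Ldelta: "delta A a \<in> L" if a: "a \<in> A0" for a
    proof -
      have "delta A a \<in> S" using Sd a A0(2) by blast
      moreover have "continuous_on (cube A) (delta A a)"
        by (rule continuous_on_eq[OF continuous_on_subset[OF continuous_on_product_coordinates]])
           (auto simp: delta_def on_cube_def)
      moreover have "\<forall>x\<in>cube A. delta A a (R x) = delta A a x"
        using Rcube a by (auto simp: delta_def on_cube_def R_def)
      ultimately show ?thesis unfolding L_def by (auto simp: delta_def on_cube_def)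
    qed
    have Lcont: "\<And>h. h \<in> L \<Longrightarrow> continuous_on K h"
      unfolding L_def using continuous_on_subset KC by blast
    have interp: "\<exists>h\<in>L. h x = f x \<and> h y = f y" if x: "x \<in> K" and y: "y \<in> K" for x y
    proof -
      have xc: "x \<in> cube A" and yc: "y \<in> cube A" using x y KC by auto
      have dx: "\<And>a. delta A a x = x a" and dy: "\<And>a. delta A a y = y a"
        using xc yc by (auto simp: delta_def on_cube_def)
      show ?thesis
      proof (cases "\<exists>a\<in>A0. \<exists>b\<in>A0. x a * y b - x b * y a \<noteq> 0")
        case True
        then obtain a b where ab: "a \<in> A0" "b \<in> A0" and d: "x a * y b - x b * y a \<noteq> 0" by blast
        define dd where "dd = x a * y b - x b * y a"
        have dd: "dd \<noteq> 0" using d by (simp add: dd_def)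
        define c1 where "c1 = (f x * y b - f y * x b) / dd"
        define c2 where "c2 = (f y * x a - f x * y a) / dd"
        have e1: "c1 * dd = f x * y b - f y * x b" and e2: "c2 * dd = f y * x a - f x * y a"
          using dd by (simp_all add: c1_def c2_def)
        have hL: "(\<lambda>z. c1 * delta A a z + c2 * delta A b z) \<in> L"
          by (rule Ladd[OF Lmult[OF Ldelta[OF ab(1)]] Lmult[OF Ldelta[OF ab(2)]]])
        have hx: "c1 * delta A a x + c2 * delta A b x = f x"
        proof -
          have "(c1 * x a + c2 * x b) * dd = (c1 * dd) * x a + (c2 * dd) * x b" by (simp add: algebra_simps)
          also have "\<dots> = (f x * y b - f y * x b) * x a + (f y * x a - f x * y a) * x b" by (simp only: e1 e2)
          also have "\<dots> = f x * dd" unfolding dd_def by (simp add: algebra_simps)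
          finally have "(c1 * x a + c2 * x b) * dd = f x * dd" .
          then show ?thesis unfolding dx by (rule mult_right_cancel[THEN iffD1, OF dd])
        qed
        have hy: "c1 * delta A a y + c2 * delta A b y = f y"
        proof -
          have "(c1 * y a + c2 * y b) * dd = (c1 * dd) * y a + (c2 * dd) * y b" by (simp add: algebra_simps)
          also have "\<dots> = (f x * y b - f y * x b) * y a + (f y * x a - f x * y a) * y b" by (simp only: e1 e2)
          also have "\<dots> = f y * dd" unfolding dd_def by (simp add: algebra_simps)
          finally have "(c1 * y a + c2 * y b) * dd = f y * dd" .
          then show ?thesis unfolding dy by (rule mult_right_cancel[THEN iffD1, OF dd])
        qed
        show ?thesis using hx hy by (intro bexI[OF _ hL]) simp
      next
        case False
        then have minor: "\<And>a b. a \<in> A0 \<Longrightarrow> b \<in> A0 \<Longrightarrow> x a * y b = x b * y a" by auto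
        obtain a where a: "a \<in> A0" "x a \<noteq> 0"
        proof -
          have "N x = 1" using x by (simp add: K_def)
          then have "\<exists>a\<in>A0. x a \<noteq> 0"
          proof (rule contrapos_pp)
            assume "\<not> (\<exists>a\<in>A0. x a \<noteq> 0)"
            then show "N x \<noteq> 1" unfolding N_def by simp
          qed
          then show ?thesis using that by blast
        qed
        define t where "t = y a / x a"
        have yt: "y = (\<lambda>b. t * x b)"
        proof
          fix b show "y b = t * x b"
          proof (cases "b \<in> A0")
            case True then show ?thesis using minor[OF a(1) True] a(2) by (simp add: t_def field_simps)
          next
            case False then show ?thesis using x y by (simp add: K_def)
          qed
        qed
        have "N y = \<bar>t\<bar> * N x" unfolding yt N_def by (simp add: abs_mult sum_distrib_left)
        then have t1: "\<bar>t\<bar> = 1" using x y by (simp add: K_def)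
        define p where "p = (\<lambda>z. (1 / x a) * delta A a z)"
        have pL: "p \<in> L" unfolding p_def by (rule Lmult[OF Ldelta[OF a(1)]])
        have px: "p x = 1" and py: "p y = t" using a(2) by (simp_all add: p_def dx dy t_def)
        have hL: "(\<lambda>z. f x * max (p z) 0 + f y * max (-1 * p z) 0) \<in> L"
          by (rule Ladd[OF Lmult[OF Lmax[OF pL L0]] Lmult[OF Lmax[OF Lmult[OF pL] L0]]])
        show ?thesis
        proof (cases "t = 1")
          case True
          then have "y = x" using yt by simp
          then show ?thesis using px by (intro bexI[OF _ hL]) simp
        next
          case False
          then have "t = -1" using t1 by linarith
          then show ?thesis using px py by (intro bexI[OF _ hL]) simp
        qed
      qed
    qed
    have exF: "\<exists>h\<in>L. \<forall>y\<in>K. \<bar>h y - f y\<bar> < inverse (real (Suc n))" for n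
    proof (rule kk[OF Kcomp continuous_on_subset[OF cont KC] Lcont Lmin Lmax interp])
      show "L \<noteq> {}" using L0 by blast
    qed simp_all
    then have "\<forall>n. \<exists>h. h \<in> L \<and> (\<forall>y\<in>K. \<bar>h y - f y\<bar> < inverse (real (Suc n)))" by blast
    then obtain F where F: "\<And>n. F n \<in> L \<and> (\<forall>y\<in>K. \<bar>F n y - f y\<bar> < inverse (real (Suc n)))"
      by metis
    have scale: "\<bar>D x\<bar> \<le> e * N x"
      if Dh: "\<And>c x. c \<ge> 0 \<Longrightarrow> x \<in> cube A \<Longrightarrow> (\<lambda>a. c * x a) \<in> cube A \<Longrightarrow> D (\<lambda>a. c * x a) = c * D x"
        and DR: "\<And>x. x \<in> cube A \<Longrightarrow> D (R x) = D x"
        and DK: "\<And>y. y \<in> K \<Longrightarrow> \<bar>D y\<bar> \<le> e"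
        and x: "x \<in> cube A" and e: "e \<ge> 0" for D e x
    proof -
      let ?r = "R x"
      have r: "?r \<in> cube A" using Rcube x by blast
      have Dx: "D x = D ?r" using DR x by simp
      show ?thesis
      proof (cases "N x = 0")
        case True
        have "\<forall>a\<in>A0. \<bar>x a\<bar> = 0" using True A0(1) unfolding N_def
          by (subst (asm) sum_nonneg_eq_0_iff) auto
        then have r0: "(\<lambda>a. 0 * ?r a) = ?r" by (auto simp: R_def)
        have "D (\<lambda>a. 0 * ?r a) = 0 * D ?r" by (rule Dh) (simp_all add: r cube0)
        then have "D ?r = 0" using r0 by simp
        then show ?thesis using Dx True by simp
      next
        case False
        define s where "s = N x"
        have s: "s > 0" using False unfolding s_def N_def
          by (metis (no_types, lifting) abs_ge_zero order_le_neq_trans sum_nonneg)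
        define y where "y = (\<lambda>a. ?r a / s)"
        have ra: "\<bar>?r a\<bar> \<le> s" for a
        proof (cases "a \<in> A0")
          case True then show ?thesis unfolding s_def N_def R_def
            using member_le_sum[of a A0 "\<lambda>a. \<bar>x a\<bar>"] A0(1) by auto
        next
          case False then show ?thesis using s by (simp add: R_def)
        qed
        have ya: "\<bar>y a\<bar> \<le> 1" for a
          using ra[of a] s by (simp add: y_def abs_divide)
        have yK: "y \<in> K"
          unfolding K_def
        proof (intro CollectI conjI allI impI)
          show "y \<in> cube A" unfolding cube_def
          proof (intro CollectI conjI ballI allI impI)
            fix a show "- 1 \<le> y a" "y a \<le> 1" using ya[of a] by auto
          next
            fix a assume "a \<notin> A" then show "y a = 0" using A0(2) by (auto simp: y_def R_def)
          qed
        next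
          fix a assume "a \<notin> A0" then show "y a = 0" by (simp add: y_def R_def)
        next
          have "N y = (\<Sum>a\<in>A0. \<bar>x a\<bar> / s)" unfolding N_def y_def R_def
            using s by (intro sum.cong) (auto simp: abs_divide)
          also have "\<dots> = 1" using s by (simp add: sum_divide_distrib[symmetric] s_def N_def)
          finally show "N y = 1" .
        qed
        have ry: "?r = (\<lambda>a. s * y a)" using s by (auto simp: y_def)
        have "D ?r = s * D y" by (subst ry, rule Dh) (use s yK KC r ry in auto)
        then have "\<bar>D x\<bar> = s * \<bar>D y\<bar>" using Dx s by (simp add: abs_mult)
        also have "\<dots> \<le> s * e" using DK[OF yK] s by simp
        finally show ?thesis by (simp add: s_def mult.commute)
      qed
    qed
    have sums_bound: "\<forall>s\<in>fbl_sums A G. s \<le> c * card A0"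
      if G: "\<And>x. x \<in> cube A \<Longrightarrow> \<bar>G x\<bar> \<le> c * N x" and c: "c \<ge> 0" for G c
    proof
      fix s assume "s \<in> fbl_sums A G"
      then obtain m :: nat and xs where s: "s = (\<Sum>i<m. \<bar>G (xs i)\<bar>)" and xs: "\<forall>i<m. xs i \<in> cube A"
        and xs1: "\<forall>a\<in>A. (\<Sum>i<m. \<bar>xs i a\<bar>) \<le> 1" unfolding fbl_sums_def by blast
      have "s \<le> (\<Sum>i<m. c * N (xs i))" unfolding s by (rule sum_mono) (use G xs in auto)
      also have "\<dots> = c * (\<Sum>a\<in>A0. \<Sum>i<m. \<bar>xs i a\<bar>)"
        unfolding N_def sum_distrib_left[symmetric] by (subst sum.swap) simp
      also have "\<dots> \<le> c * (\<Sum>a\<in>A0. 1)" using c xs1 A0(2) by (intro mult_left_mono sum_mono) auto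
      finally show "s \<le> c * card A0" by simp
    qed
    have zero_in: "\<And>G. 0 \<in> fbl_sums A G"
      unfolding fbl_sums_def by force
    define g where "g = on_cube A f"
    obtain M where M: "\<And>y. y \<in> K \<Longrightarrow> \<bar>f y\<bar> \<le> M" "M \<ge> 0"
    proof -
      have "bounded (f ` K)"
        by (rule compact_imp_bounded[OF compact_continuous_image[OF continuous_on_subset[OF cont KC] Kcomp]])
      then obtain M where "\<And>y. y \<in> K \<Longrightarrow> \<bar>f y\<bar> \<le> M" by (auto simp: bounded_iff)
      then show ?thesis using that[of "max M 0"] by force
    qed
    have gfin: "g \<in> fin_norm_space A"
    proof -
      have "\<forall>s\<in>fbl_sums A g. s \<le> M * card A0"
      proof (rule sums_bound[OF _ M(2)])
        fix x assume x: "x \<in> cube A"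
        have "\<bar>f x\<bar> \<le> M * N x"
          by (rule scale[OF homog fR M(1) x M(2)]) auto
        then show "\<bar>g x\<bar> \<le> M * N x" using x by (simp add: g_def on_cube_def)
      qed
      then show ?thesis unfolding fin_norm_space_def g_def on_cube_def
        by (auto intro: bdd_aboveI)
    qed
    show "on_cube A f \<in> S"
    proof -
      have FS: "\<forall>n. F n \<in> S" using F unfolding L_def by blast
      have bnd: "\<forall>s\<in>fbl_sums A (\<lambda>z. F n z - g z). s \<le> inverse (real (Suc n)) * card A0" for n
      proof (rule sums_bound)
        fix x assume x: "x \<in> cube A"
        have FL: "F n \<in> S \<and> (\<forall>c x. c \<ge> 0 \<longrightarrow> x \<in> cube A \<longrightarrow> (\<lambda>a. c * x a) \<in> cube A \<longrightarrow>
         F n (\<lambda>a. c * x a) = c * F n x) \<and> (\<forall>x\<in>cube A. F n (R x) = F n x)"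
          using F[of n] unfolding L_def by simp
        have Fh: "\<And>c z. c \<ge> 0 \<Longrightarrow> z \<in> cube A \<Longrightarrow> (\<lambda>a. c * z a) \<in> cube A \<Longrightarrow> F n (\<lambda>a. c * z a) = c * F n z"
          using FL by blast
        have FR: "\<And>z. z \<in> cube A \<Longrightarrow> F n (R z) = F n z"
          using FL by blast
        have "\<bar>F n x - f x\<bar> \<le> inverse (real (Suc n)) * N x"
        proof (rule scale[where D="\<lambda>z. F n z - f z"])
          fix c z assume "c \<ge> 0" "z \<in> cube A" "(\<lambda>a. c * z a) \<in> cube A"
          then show "F n (\<lambda>a. c * z a) - f (\<lambda>a. c * z a) = c * (F n z - f z)"
            using Fh homog by (simp add: right_diff_distrib)
        next
          fix z assume "z \<in> cube A" then show "F n (R z) - f (R z) = F n z - f z" using FR fR by simp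
        next
          fix y assume "y \<in> K" then show "\<bar>F n y - f y\<bar> \<le> inverse (real (Suc n))"
            using F[of n] by (meson less_imp_le)
        qed (use x in auto)
        then show "\<bar>F n x - g x\<bar> \<le> inverse (real (Suc n)) * N x" using x by (simp add: g_def on_cube_def)
      qed simp
      have bdd: "bdd_above (fbl_sums A (\<lambda>z. F n z - g z))" for n
        using bnd[of n] by (intro bdd_aboveI) blast
      have lim: "(\<lambda>n. fbl_norm A (\<lambda>z. F n z - g z)) \<longlonglongrightarrow> 0"
      proof (rule tendsto_sandwich[of "\<lambda>n. 0" _ _ "\<lambda>n. inverse (real (Suc n)) * card A0"])
        show "\<forall>\<^sub>F n in sequentially. 0 \<le> fbl_norm A (\<lambda>z. F n z - g z)"
        proof (rule always_eventually, rule allI)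
          fix n show "0 \<le> fbl_norm A (\<lambda>z. F n z - g z)"
            unfolding fbl_norm_def by (rule cSup_upper[OF zero_in bdd])
        qed
        show "\<forall>\<^sub>F n in sequentially. fbl_norm A (\<lambda>z. F n z - g z) \<le> inverse (real (Suc n)) * card A0"
        proof (rule always_eventually, rule allI)
          fix n show "fbl_norm A (\<lambda>z. F n z - g z) \<le> inverse (real (Suc n)) * card A0"
            unfolding fbl_norm_def
          proof (rule cSup_least)
            show "fbl_sums A (\<lambda>z. F n z - g z) \<noteq> {}" using zero_in by blast
          next
            fix s assume "s \<in> fbl_sums A (\<lambda>z. F n z - g z)"
            then show "s \<le> inverse (real (Suc n)) * card A0" using bnd[of n] by blast
          qed
        qed
        show "(\<lambda>n. 0::real) \<longlonglongrightarrow> 0" by simp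
        show "(\<lambda>n. inverse (real (Suc n)) * real (card A0)) \<longlonglongrightarrow> 0"
          by (rule tendsto_mult_left_zero[OF LIMSEQ_inverse_real_of_nat])
      qed
      have "g \<in> S" by (rule S_lim[OF FS gfin lim])
      then show ?thesis by (simp add: g_def)
    qed
  qed
qed

end
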